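(* Let $H$ be a $d\times d$ Hermitian matrix with exactly $K$ distinct eigenvalues $\lambda_1,\dots,\lambda_K$, and let $\mathcal{L}=i\,\mathrm{ad}_H$, i.e. $\mathcal{L}(\rho)=i[H,\rho]$. Then there exist a Hermitian-preserving trace-preserving (HPTP) linear map $\mathcal{P}$ from operators on $\mathbb{C}^d\otimes\mathbb{C}^K$ to operators on $\mathbb{C}^d$ and a family of program states $(\pi_t)_{t\ge0}$ on $\mathbb{C}^K$ such that $\mathcal{P}(\rho\otimes\pi_t)=e^{t\mathcal{L}}(\rho)$ for all $t\ge0$ and all $\rho$; that is, $\mathcal{L}$ can be exactly programmed by a quasi-sampling protocol with program states of dimension $K$.
   Context: $\mathrm{ad}_H=[H,\cdot]$. A quasi-sampling (quasi-quantum) programming protocol is a pair consisting of an HPTP retrieval map $\mathcal{P}$ and program states $\pi_t$ with $\mathcal{P}(\cdot\otimes\pi_t)=e^{t\mathcal{L}}$; HPTP maps are implemented in expectation by quasi-probability sampling of CPTP maps. *)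

theory Defs
  imports "HOL-Analysis.Analysis"
begin

text \<open>Operators (matrices) on C^n are represented as complex^'n^'n with a finite index type 'n.
  The tensor product C^d (x) C^K is indexed by the product type 'd \<times> 'k.\<close>

definition cmat_scale :: "complex \<Rightarrow> complex^'n^'m \<Rightarrow> complex^'n^'m" where
  "cmat_scale c A = (\<chi> i j. c * A$i$j)"

definition hermitian_mat :: "complex^'n^'n \<Rightarrow> bool" where
  "hermitian_mat A \<longleftrightarrow> (\<forall>i j. A$i$j = cnj (A$j$i))"

definition mat_eigenvalues :: "complex^'n^'n \<Rightarrow> complex set" where
  "mat_eigenvalues A = {l. \<exists>v. v \<noteq> 0 \<and> A *v v = l *s v}"

definition commutator :: "complex^'n^'n \<Rightarrow> complex^'n^'n \<Rightarrow> complex^'n^'n" where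
  "commutator A B = A ** B - B ** A"

definition i_ad :: "complex^'n^'n \<Rightarrow> complex^'n^'n \<Rightarrow> complex^'n^'n" where
  "i_ad H rho = cmat_scale \<i> (commutator H rho)"

definition super_exp :: "real \<Rightarrow> ('a \<Rightarrow> 'a) \<Rightarrow> 'a \<Rightarrow> 'a::real_normed_vector" where
  "super_exp t L rho = (\<Sum>n. (t ^ n / fact n) *\<^sub>R (L ^^ n) rho)"

definition tensor_mat :: "complex^'n^'n \<Rightarrow> complex^'k^'k \<Rightarrow> complex^('n \<times> 'k)^('n \<times> 'k)" where
  "tensor_mat A B = (\<chi> p q. A$fst p$fst q * B$snd p$snd q)"

definition complex_linear_map :: "(complex^'n^'n \<Rightarrow> complex^'m^'m) \<Rightarrow> bool" where
  "complex_linear_map P \<longleftrightarrow>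
     (\<forall>A B. P (A + B) = P A + P B) \<and> (\<forall>c A. P (cmat_scale c A) = cmat_scale c (P A))"

definition HPTP :: "(complex^'n^'n \<Rightarrow> complex^'m^'m) \<Rightarrow> bool" where
  "HPTP P \<longleftrightarrow> complex_linear_map P
     \<and> (\<forall>A. hermitian_mat A \<longrightarrow> hermitian_mat (P A))
     \<and> (\<forall>A. trace (P A) = trace A)"

definition psd_mat :: "complex^'n^'n \<Rightarrow> bool" where
  "psd_mat A \<longleftrightarrow> (\<forall>v::complex^'n.
     (let q = (\<Sum>i\<in>UNIV. \<Sum>j\<in>UNIV. cnj (v$i) * A$i$j * v$j) in Im q = 0 \<and> Re q \<ge> 0))"

definition density_mat :: "complex^'n^'n \<Rightarrow> bool" where
  "density_mat A \<longleftrightarrow> psd_mat A \<and> trace A = 1"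

end

theory Submission
  imports Defs "HOL-Computational_Algebra.Fundamental_Theorem_Algebra"
begin

definition adj :: "complex^'n^'n \<Rightarrow> complex^'n^'n" where
  "adj A = (\<chi> i j. cnj (A$j$i))"

lemma herm_adj: "hermitian_mat A \<longleftrightarrow> adj A = A"
  unfolding hermitian_mat_def adj_def vec_eq_iff
  by (auto simp: eq_commute)

lemma adj_mult: "adj (A ** B) = adj B ** adj A"
  unfolding adj_def matrix_matrix_mult_def vec_eq_iff by (simp add: mult.commute)

lemma adj_add: "adj (A + B) = adj A + adj B"
  by (simp add: adj_def vec_eq_iff)

lemma adj_diff: "adj (A - B) = adj A - adj B"
  by (simp add: adj_def vec_eq_iff)

lemma adj_sum: "adj (sum f S) = (\<Sum>x\<in>S. adj (f x))"
  by (simp add: adj_def vec_eq_iff)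

lemma adj_scale: "adj (cmat_scale c A) = cmat_scale (cnj c) (adj A)"
  by (simp add: adj_def cmat_scale_def vec_eq_iff)

lemma adj_mat: "adj (mat c) = mat (cnj c)"
  by (simp add: adj_def mat_def vec_eq_iff)

lemma adj_adj[simp]: "adj (adj A) = A"
  by (simp add: adj_def vec_eq_iff)

definition cinner :: "complex^'n \<Rightarrow> complex^'n \<Rightarrow> complex" where
  "cinner x y = (\<Sum>i\<in>UNIV. cnj (x$i) * y$i)"

lemma cinner_adj: "cinner x (A *v y) = cinner (adj A *v x) y"
  unfolding cinner_def adj_def matrix_vector_mult_def
  by (simp add: sum_distrib_left sum_distrib_right mult_ac) (rule sum.swap)

lemma cinner_self_eq_0: "cinner x x = 0 \<Longrightarrow> x = 0"
proof -
  assume a: "cinner x x = 0"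
  have "\<And>i. cnj (x$i) * x$i = of_real ((cmod (x$i))\<^sup>2)"
    by (metis complex_norm_square mult.commute)
  hence "cinner x x = of_real (\<Sum>i\<in>UNIV. (cmod (x$i))\<^sup>2)"
    by (simp add: cinner_def)
  hence "(\<Sum>i\<in>UNIV. (cmod (x$i))\<^sup>2) = Re (cinner x x)"
    by simp
  hence s: "(\<Sum>i\<in>UNIV. (cmod (x$i))\<^sup>2) = 0" using a by simp
  have "\<forall>i\<in>UNIV. (cmod (x$i))\<^sup>2 = 0"
    using sum_nonneg_eq_0_iff[OF finite, of UNIV "\<lambda>i. (cmod (x$i))\<^sup>2"] s by simp
  thus "x = 0" by (simp add: vec_eq_iff)
qed

lemma scale_mult_left: "cmat_scale c (A ** B) = cmat_scale c A ** B"
  by (simp add: cmat_scale_def matrix_matrix_mult_def vec_eq_iff sum_distrib_left mult_ac)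
lemma scale_mult_right: "cmat_scale c (A ** B) = A ** cmat_scale c B"
  by (simp add: cmat_scale_def matrix_matrix_mult_def vec_eq_iff sum_distrib_left mult_ac)
lemma scale_add: "cmat_scale c (A + B) = cmat_scale c A + cmat_scale c B"
  by (simp add: cmat_scale_def vec_eq_iff distrib_left)
lemma scale_diff: "cmat_scale c (A - B) = cmat_scale c A - cmat_scale c B"
  by (simp add: cmat_scale_def vec_eq_iff right_diff_distrib)
lemma scale_scale: "cmat_scale c (cmat_scale d A) = cmat_scale (c * d) A"
  by (simp add: cmat_scale_def vec_eq_iff)
lemma scale_1[simp]: "cmat_scale 1 A = A"
  by (simp add: cmat_scale_def vec_eq_iff)
lemma scale_0[simp]: "cmat_scale 0 A = 0" "cmat_scale c 0 = 0"
  by (simp_all add: cmat_scale_def vec_eq_iff)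
lemma scale_sum: "cmat_scale c (sum f S) = (\<Sum>x\<in>S. cmat_scale c (f x))"
  by (induction S rule: infinite_finite_induct) (auto simp: scale_add)
lemma sum_scale: "cmat_scale (sum f S) A = (\<Sum>x\<in>S. cmat_scale (f x) A)"
  by (induction S rule: infinite_finite_induct) (auto simp: cmat_scale_def vec_eq_iff distrib_right)
lemma mat_mult_left: "mat c ** A = cmat_scale c A"
  by (simp add: cmat_scale_def mat_def matrix_matrix_mult_def vec_eq_iff if_distrib if_distribR cong: if_cong)
lemma mat_mult_right: "A ** mat c = cmat_scale c A"
  by (simp add: cmat_scale_def mat_def matrix_matrix_mult_def vec_eq_iff if_distrib if_distribR mult.commute cong: if_cong)
lemma add_mult_left: "(A + B) ** (C::complex^'p^'n) = A ** C + B ** C"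
  by (simp add: matrix_matrix_mult_def vec_eq_iff sum.distrib distrib_right)
lemma sum_mult_left: "(sum f S) ** (A::complex^'p^'n) = (\<Sum>x\<in>S. f x ** A)"
  by (induction S rule: infinite_finite_induct) (auto simp: add_mult_left)
lemma sum_mult_right: "A ** (sum f S) = (\<Sum>x\<in>S. A ** f x)"
  by (induction S rule: infinite_finite_induct) (auto simp: matrix_add_ldistrib)
lemma diff_mult_left: "(A - B) ** (C::complex^'p^'n) = A ** C - B ** C"
  by (simp add: matrix_matrix_mult_def vec_eq_iff sum_subtractf left_diff_distrib)
lemma diff_mult_right: "(C::complex^'p^'n) ** (A - B) = C ** A - C ** B"
  by (simp add: matrix_matrix_mult_def vec_eq_iff sum_subtractf right_diff_distrib)
lemma scale_mult_vec: "cmat_scale c A *v v = c *s (A *v v)"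
  by (simp add: cmat_scale_def matrix_vector_mult_def vec_eq_iff sum_distrib_left mult_ac)
lemma trace_scale: "trace (cmat_scale c A) = c * trace A"
  by (simp add: trace_def cmat_scale_def sum_distrib_left)
lemma trace_sum: "trace (sum f S) = (\<Sum>x\<in>S. trace (f x))"
  unfolding trace_def by (simp add: sum.swap[of _ UNIV])


lemma scale_sub_scalar: "cmat_scale a X - cmat_scale b X = cmat_scale (a - b) X"
  by (simp add: cmat_scale_def vec_eq_iff left_diff_distrib)
lemma scale_add_scalar: "cmat_scale a X + cmat_scale b X = cmat_scale (a + b) X"
  by (simp add: cmat_scale_def vec_eq_iff distrib_right)
lemma mat_add: "mat (a + b) = (mat a + mat b :: complex^'n^'n)"
  by (simp add: mat_def vec_eq_iff)
lemma scale_mat: "cmat_scale a (mat b) = (mat (a * b) :: complex^'n^'n)"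
  by (simp add: mat_def cmat_scale_def vec_eq_iff)
lemma mat_mult_vec: "mat c *v v = c *s (v :: complex^'n)"
  by (simp add: mat_def matrix_vector_mult_def vec_eq_iff if_distrib if_distribR cong: if_cong)

locale herm =
  fixes H :: "complex^'d^'d"
  assumes herm: "hermitian_mat H"
begin

definition lin :: "complex \<Rightarrow> complex^'d^'d" where "lin \<mu> = H - mat \<mu>"
definition MP :: "complex list \<Rightarrow> complex^'d^'d" where
  "MP xs = foldr (\<lambda>\<mu> M. lin \<mu> ** M) xs (mat 1)"
definition Hp :: "nat \<Rightarrow> complex^'d^'d" where "Hp n = ((\<lambda>M. H ** M) ^^ n) (mat 1)"
definition PM :: "complex poly \<Rightarrow> complex^'d^'d" where
  "PM p = (\<Sum>i<Suc (degree p). mat (coeff p i) ** Hp i)"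

lemma MP_Nil[simp]: "MP [] = mat 1" and MP_Cons[simp]: "MP (\<mu> # xs) = lin \<mu> ** MP xs"
  by (simp_all add: MP_def)

lemma lin_comm_gen: "H ** M = M ** H \<Longrightarrow> lin \<mu> ** M = M ** lin \<mu>"
  by (simp add: lin_def diff_mult_left diff_mult_right mat_mult_left mat_mult_right)

lemma H_lin: "H ** lin \<mu> = lin \<mu> ** H"
  using lin_comm_gen[of H \<mu>] by simp

lemma H_MP: "H ** MP xs = MP xs ** H"
proof (induction xs)
  case (Cons \<mu> xs)
  have "H ** MP (\<mu> # xs) = (H ** lin \<mu>) ** MP xs" by (simp add: matrix_mul_assoc)
  also have "\<dots> = lin \<mu> ** (H ** MP xs)" by (simp add: H_lin matrix_mul_assoc)
  also have "\<dots> = MP (\<mu> # xs) ** H" using Cons by (simp add: matrix_mul_assoc)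
  finally show ?case .
qed simp

lemma lin_lin: "lin a ** lin b = lin b ** lin a"
  by (rule lin_comm_gen) (simp add: H_lin)

lemma MP_lin: "MP xs ** lin \<mu> = lin \<mu> ** MP xs"
  by (rule lin_comm_gen[symmetric]) (simp add: H_MP)

lemma MP_remove1: "\<mu> \<in> set xs \<Longrightarrow> MP xs = lin \<mu> ** MP (remove1 \<mu> xs)"
proof (induction xs)
  case (Cons y ys)
  show ?case
  proof (cases "y = \<mu>")
    case False
    hence "\<mu> \<in> set ys" using Cons by simp
    hence "MP (y # ys) = (lin y ** lin \<mu>) ** MP (remove1 \<mu> ys)"
      using Cons by (simp add: matrix_mul_assoc)
    also have "\<dots> = lin \<mu> ** MP (remove1 \<mu> (y # ys))"
      using False by (simp add: lin_lin matrix_mul_assoc)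
    finally show ?thesis .
  qed simp
qed simp

lemma MP_eigen:
  assumes "H ** M = cmat_scale l M"
  shows "MP xs ** M = cmat_scale (prod_list (map (\<lambda>\<mu>. l - \<mu>) xs)) M"
proof (induction xs)
  case (Cons \<mu> xs)
  have "MP (\<mu> # xs) ** M = lin \<mu> ** cmat_scale (prod_list (map (\<lambda>\<mu>. l - \<mu>) xs)) M"
    using Cons by (simp add: matrix_mul_assoc[symmetric])
  also have "\<dots> = cmat_scale (prod_list (map (\<lambda>\<mu>. l - \<mu>) xs)) (lin \<mu> ** M)"
    by (simp add: scale_mult_right)
  also have "lin \<mu> ** M = cmat_scale (l - \<mu>) M"
    by (simp add: lin_def diff_mult_left assms mat_mult_left scale_sub_scalar)
  finally show ?case by (simp add: scale_scale mult.commute)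
qed simp

lemma Hp_0[simp]: "Hp 0 = mat 1" and Hp_Suc: "Hp (Suc n) = H ** Hp n"
  by (simp_all add: Hp_def)

lemma PM_bound:
  assumes "degree p < n"
  shows "PM p = (\<Sum>i<n. mat (coeff p i) ** Hp i)"
  unfolding PM_def
proof (rule sum.mono_neutral_left)
  show "\<forall>i\<in>{..<n} - {..<Suc (degree p)}. mat (coeff p i) ** Hp i = 0"
    by (auto simp: coeff_eq_0)
qed (use assms in auto)

lemma PM_add: "PM (p + q) = PM p + PM q"
proof -
  define n where "n = Suc (max (degree p) (degree q))"
  have "degree (p + q) < n" "degree p < n" "degree q < n"
    using degree_add_le_max[of p q] by (auto simp: n_def)
  thus ?thesis
    by (simp add: PM_bound mat_add add_mult_left sum.distrib del: sum.lessThan_Suc)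
qed

lemma PM_smult: "PM (smult c p) = cmat_scale c (PM p)"
proof -
  have "degree (smult c p) < Suc (degree p)" "degree p < Suc (degree p)" by auto
  thus ?thesis
    by (simp add: PM_bound[of "smult c p" "Suc (degree p)"] PM_bound[of p "Suc (degree p)"] scale_sum scale_mult_left scale_mat del: sum.lessThan_Suc)
qed

lemma PM_0: "PM 0 = 0"
  by (simp add: PM_def)

lemma PM_sum: "PM (sum f S) = (\<Sum>x\<in>S. PM (f x))"
  by (induction S rule: infinite_finite_induct) (simp_all add: PM_add PM_0)

lemma PM_pCons0: "PM (pCons 0 p) = H ** PM p"
proof -
  have d: "degree (pCons 0 p) < Suc (Suc (degree p))" "degree p < Suc (degree p)"
    by (auto simp: degree_pCons_le le_less_trans)
  have "PM (pCons 0 p) = (\<Sum>i<Suc (Suc (degree p)). mat (coeff (pCons 0 p) i) ** Hp i)"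
    using d(1) by (rule PM_bound)
  also have "\<dots> = (\<Sum>i<Suc (degree p). mat (coeff p i) ** Hp (Suc i))"
    by (subst sum.lessThan_Suc_shift) simp
  also have "\<dots> = (\<Sum>i<Suc (degree p). H ** (mat (coeff p i) ** Hp i))"
    by (simp add: Hp_Suc mat_mult_left scale_mult_right)
  also have "\<dots> = H ** PM p"
    by (simp add: PM_def sum_mult_right del: sum.lessThan_Suc)
  finally show ?thesis .
qed

lemma PM_lin: "PM ([:-\<mu>, 1:] * p) = lin \<mu> ** PM p"
proof -
  have e: "[:-\<mu>, 1:] * p = smult (-\<mu>) p + pCons 0 p" by simp
  have "PM ([:-\<mu>, 1:] * p) = cmat_scale (-\<mu>) (PM p) + H ** PM p"
    by (subst e, simp only: PM_add PM_smult PM_pCons0)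
  thus ?thesis
    by (simp add: lin_def diff_mult_left mat_mult_left cmat_scale_def vec_eq_iff)
qed

lemma PM_1: "PM 1 = mat 1"
  by (simp add: PM_def)

lemma PM_prod_lin: "PM (prod_list (map (\<lambda>\<mu>. [:-\<mu>, 1:]) xs)) = MP xs"
  by (induction xs) (simp_all only: list.map prod_list.Cons prod_list.Nil PM_1 PM_lin MP_Cons MP_Nil)

lemma PM_monom: "PM (monom c i) = mat c ** Hp i"
proof -
  have "degree (monom c i) < Suc i" by (rule le_less_trans[OF degree_monom_le]) simp
  hence "PM (monom c i) = (\<Sum>j<Suc i. mat (coeff (monom c i) j) ** Hp j)" by (rule PM_bound)
  also have "\<dots> = (\<Sum>j<Suc i. if i = j then mat c ** Hp j else 0)"
    by (intro sum.cong) (auto simp: coeff_monom)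
  finally show ?thesis by simp
qed

end

lemma cinner_scale_right: "cinner x (c *s y) = c * cinner x y"
  by (simp add: cinner_def sum_distrib_left mult_ac)
lemma cinner_scale_left: "cinner (c *s x) y = cnj c * cinner x y"
  by (simp add: cinner_def sum_distrib_left mult_ac)

lemma sq_zero:
  assumes "adj A = A" "A *v (A *v y) = 0"
  shows "A *v y = (0::complex^'n)"
proof -
  have "cinner (A *v y) (A *v y) = cinner y (A *v (A *v y))"
    using cinner_adj[of y A "A *v y"] assms(1) by simp
  also have "\<dots> = 0" using assms(2) by (simp add: cinner_def)
  finally show ?thesis by (rule cinner_self_eq_0)
qed

lemma sum_mult_vec: "(sum f S) *v v = (\<Sum>x\<in>S. f x *v v)"
  by (induction S rule: infinite_finite_induct) (simp_all add: matrix_vector_mult_add_rdistrib)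

lemma prod_upt: "(\<Prod>i<n. g i) = prod_list (map g [0..<n])"
  by (induction n) (simp_all add: mult.commute)

context herm
begin

lemma adjH: "adj H = H" using herm by (simp add: herm_adj)

lemma eig_real:
  assumes "\<mu> \<in> mat_eigenvalues H"
  shows "cnj \<mu> = \<mu>"
proof -
  obtain u where u: "u \<noteq> 0" "H *v u = \<mu> *s u"
    using assms by (auto simp: mat_eigenvalues_def)
  have "cinner u (H *v u) = cinner (H *v u) u"
    using cinner_adj[of u H u] adjH by simp
  hence "\<mu> * cinner u u = cnj \<mu> * cinner u u"
    using u by (simp add: cinner_scale_left cinner_scale_right)
  moreover have "cinner u u \<noteq> 0" using u cinner_self_eq_0 by blast
  ultimately show ?thesis by simp
qed

lemma lin_adj: "cnj \<mu> = \<mu> \<Longrightarrow> adj (lin \<mu>) = lin \<mu>"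
  by (simp add: lin_def adj_diff adj_mat adjH)

lemma annih_poly: "\<exists>p. p \<noteq> 0 \<and> PM p *v v = 0"
proof -
  define f where "f i = Hp i *v v" for i
  define N where "N = DIM(complex^'d)"
  show ?thesis
  proof (cases "inj_on f {..N}")
    case False
    then obtain a b where ab: "a \<noteq> b" "f a = f b"
      by (auto simp: inj_on_def)
    define p where "p = monom (1::complex) a + smult (-1) (monom 1 b)"
    have "coeff p a = 1" using ab by (simp add: p_def)
    hence "p \<noteq> 0" by auto
    moreover have "PM p *v v = f a - f b"
      unfolding p_def PM_add PM_smult PM_monom f_def
      by (simp add: matrix_vector_mult_add_rdistrib scale_mult_vec vec_eq_iff)
    ultimately show ?thesis using ab by auto
  next
    case True
    define S where "S = f ` {..N}"
    have fin: "finite S" by (simp add: S_def)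
    have "card S = Suc N" using True by (simp add: S_def card_image)
    hence "\<not> independent S" using independent_bound[of S] by (auto simp: N_def)
    then obtain u w where uw: "w \<in> S" "u w \<noteq> 0" "(\<Sum>x\<in>S. u x *\<^sub>R x) = 0"
      using real_vector.dependent_finite[OF fin] by blast
    define p where "p = (\<Sum>i\<le>N. monom (complex_of_real (u (f i))) i)"
    obtain i0 where i0: "i0 \<le> N" "w = f i0" using uw(1) by (auto simp: S_def)
    have "coeff p i0 = complex_of_real (u (f i0))"
      by (simp add: p_def coeff_sum coeff_monom i0(1))
    hence "p \<noteq> 0" using uw(2) i0 by auto
    moreover have "PM p *v v = (\<Sum>i\<le>N. u (f i) *\<^sub>R f i)"
      by (simp add: p_def PM_sum PM_monom sum_mult_vec f_def scale_mult_vec mat_mult_left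
          vec_eq_iff, simp add: scaleR_conv_of_real)
    moreover have "(\<Sum>i\<le>N. u (f i) *\<^sub>R f i) = (\<Sum>x\<in>S. u x *\<^sub>R x)"
      unfolding S_def using True by (simp add: sum.reindex)
    ultimately show ?thesis using uw(3) by auto
  qed
qed

lemma annih_list: "\<exists>xs. MP xs *v v = 0"
proof -
  obtain p where p: "p \<noteq> 0" "PM p *v v = 0" using annih_poly by blast
  obtain root where r: "smult (lead_coeff p) (\<Prod>i<degree p. [:-root i, 1:]) = p"
    using complex_poly_decompose' by blast
  define xs where "xs = map root [0..<degree p]"
  have "(\<Prod>i<degree p. [:-root i, 1:]) = prod_list (map (\<lambda>\<mu>. [:-\<mu>, 1:]) xs)"
    by (simp add: prod_upt xs_def o_def)
  hence "PM p = cmat_scale (lead_coeff p) (MP xs)"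
    using r PM_smult PM_prod_lin by metis
  hence "lead_coeff p *s (MP xs *v v) = 0" using p by (simp add: scale_mult_vec)
  hence "MP xs *v v = 0" using p(1) by (simp add: vec_eq_iff)
  thus ?thesis by blast
qed

lemma reduce:
  assumes L: "mat_eigenvalues H \<subseteq> set L"
  shows "MP xs *v v = 0 \<Longrightarrow> MP L *v v = 0"
proof (induction xs arbitrary: v)
  case Nil
  thus ?case by simp
next
  case (Cons \<mu> xs)
  have "MP xs *v (lin \<mu> *v v) = 0"
    using Cons.prems by (simp add: matrix_vector_mul_assoc MP_lin[symmetric] matrix_mul_assoc)
  hence "MP L *v (lin \<mu> *v v) = 0" by (rule Cons.IH)
  hence u: "lin \<mu> *v (MP L *v v) = 0"
    by (simp add: matrix_vector_mul_assoc MP_lin)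
  show ?case
  proof (rule ccontr)
    assume nz: "MP L *v v \<noteq> 0"
    have "H *v (MP L *v v) = \<mu> *s (MP L *v v)"
      using u by (simp add: lin_def matrix_vector_mult_diff_rdistrib mat_mult_vec)
    hence ev: "\<mu> \<in> mat_eigenvalues H" using nz by (auto simp: mat_eigenvalues_def)
    hence "\<mu> \<in> set L" using L by auto
    hence eq: "MP L *v v = lin \<mu> *v (MP (remove1 \<mu> L) *v v)"
      by (simp add: MP_remove1[of \<mu> L] matrix_vector_mul_assoc)
    have "lin \<mu> *v (MP (remove1 \<mu> L) *v v) = 0"
      by (rule sq_zero[OF lin_adj[OF eig_real[OF ev]]]) (use u eq in simp)
    thus False using nz eq by simp
  qed
qed

lemma MP_zero:
  assumes "mat_eigenvalues H \<subseteq> set L"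
  shows "MP L = 0"
proof -
  have "\<forall>v. MP L *v v = 0 *v v"
    using annih_list reduce[OF assms] by auto
  thus ?thesis by (simp add: matrix_eq)
qed

end

lemma poly_linprod: "poly (prod_list (map (\<lambda>m. [:-m, 1:]) xs)) (x::complex) = prod_list (map (\<lambda>m. x - m) xs)"
  by (induction xs) (simp_all add: algebra_simps)

lemma degree_linprod: "degree (prod_list (map (\<lambda>m. [:-m, 1:]) xs) :: complex poly) \<le> length xs"
proof (induction xs)
  case (Cons a xs)
  have "degree ([:-a, 1:] * prod_list (map (\<lambda>m. [:-m, 1:]) xs)) \<le> 1 + length xs"
    using degree_mult_le[of "[:-a, 1:]" "prod_list (map (\<lambda>m. [:-m, 1:]) xs)"] Cons by simp
  thus ?case by simp
qed simp

lemma cnj_prodlist: "cnj l = l \<Longrightarrow> \<forall>m\<in>set xs. cnj m = m \<Longrightarrow>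
   cnj (prod_list (map (\<lambda>m. l - m) xs)) = prod_list (map (\<lambda>m. l - m) xs)"
  by (induction xs) simp_all

locale spec = herm H for H :: "complex^'d^'d" +
  fixes L :: "complex list"
  assumes distL: "distinct L" and setL: "set L = mat_eigenvalues H" and Lne: "L \<noteq> []"
begin

definition cL :: "complex \<Rightarrow> complex" where
  "cL l = prod_list (map (\<lambda>m. l - m) (remove1 l L))"
definition Proj :: "complex \<Rightarrow> complex^'d^'d" where
  "Proj l = cmat_scale (1 / cL l) (MP (remove1 l L))"

lemma realL: "m \<in> set L \<Longrightarrow> cnj m = m"
  using eig_real setL by blast

lemma cL_nz: "l \<in> set L \<Longrightarrow> cL l \<noteq> 0"
  using distL by (auto simp: cL_def prod_list_zero_iff)

lemma MP_L: "MP L = 0"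
  using MP_zero setL by simp

lemma Proj_eig: assumes "l \<in> set L" shows "H ** Proj l = cmat_scale l (Proj l)"
proof -
  have "lin l ** MP (remove1 l L) = 0" using MP_remove1[OF assms] MP_L by simp
  hence "H ** MP (remove1 l L) = cmat_scale l (MP (remove1 l L))"
    by (simp add: lin_def diff_mult_left mat_mult_left)
  thus ?thesis
    by (simp add: Proj_def scale_mult_right[symmetric] scale_scale mult.commute)
qed

lemma Proj_H: "Proj l ** H = H ** Proj l"
  by (simp add: Proj_def scale_mult_right[symmetric] scale_mult_left[symmetric] H_MP)

lemma Proj_orth:
  assumes "l \<in> set L" "n \<in> set L"
  shows "Proj l ** Proj n = (if l = n then Proj n else 0)"
proof -
  have "Proj l ** Proj n = cmat_scale (1 / cL l) (MP (remove1 l L) ** Proj n)"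
    by (simp add: Proj_def scale_mult_left)
  also have "\<dots> = cmat_scale (1 / cL l * prod_list (map (\<lambda>m. n - m) (remove1 l L))) (Proj n)"
    by (simp add: MP_eigen[OF Proj_eig[OF assms(2)]] scale_scale)
  also have "\<dots> = (if l = n then Proj n else 0)"
  proof (cases "l = n")
    case True
    thus ?thesis using cL_nz[OF assms(1)] by (simp add: cL_def)
  next
    case False
    hence "n \<in> set (remove1 l L)" using assms distL by simp
    hence "prod_list (map (\<lambda>m. n - m) (remove1 l L)) = 0"
      by (simp add: prod_list_zero_iff)
    thus ?thesis using False by simp
  qed
  finally show ?thesis .
qed

lemma Proj_sum: "(\<Sum>l\<in>set L. Proj l) = mat 1"
proof -
  define g where "g = (\<Sum>l\<in>set L. smult (1 / cL l) (prod_list (map (\<lambda>m. [:-m, 1:]) (remove1 l L))))"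
  have val: "poly g n = 1" if n: "n \<in> set L" for n
  proof -
    have "poly g n = (\<Sum>l\<in>set L. if l = n then 1 else 0)"
      unfolding g_def poly_sum
    proof (intro sum.cong refl)
      fix l assume l: "l \<in> set L"
      show "poly (smult (1 / cL l) (prod_list (map (\<lambda>m. [:-m, 1:]) (remove1 l L)))) n
            = (if l = n then 1 else 0)"
      proof (cases "l = n")
        case True thus ?thesis using cL_nz[OF l] by (simp add: poly_linprod cL_def)
      next
        case False
        hence "n \<in> set (remove1 l L)" using n distL by simp
        thus ?thesis using False by (simp add: poly_linprod prod_list_zero_iff)
      qed
    qed
    also have "\<dots> = 1" using n by simp
    finally show ?thesis .
  qed
  have dg: "degree g \<le> length L - 1"
    unfolding g_def
  proof (rule degree_sum_le)
    fix l assume "l \<in> set L"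
    have "degree (prod_list (map (\<lambda>m. [:-m, 1:]) (remove1 l L)) :: complex poly) \<le> length L - 1"
      using degree_linprod[of "remove1 l L"] \<open>l \<in> set L\<close> by (simp add: length_remove1)
    thus "degree (smult (1 / cL l) (prod_list (map (\<lambda>m. [:-m, 1:]) (remove1 l L)))) \<le> length L - 1"
      by (rule le_trans[OF degree_smult_le])
  qed simp
  have "g = 1"
  proof (rule ccontr)
    assume ne: "g \<noteq> 1"
    hence "g - 1 \<noteq> 0" by simp
    hence c: "card {x. poly (g - 1) x = 0} \<le> degree (g - 1)" by (rule card_poly_roots_bound)
    have "degree (g - 1) \<le> length L - 1"
      using degree_diff_le[of g "length L - 1" 1] dg by simp
    moreover have "set L \<subseteq> {x. poly (g - 1) x = 0}" using val by auto
    hence "card (set L) \<le> card {x. poly (g - 1) x = 0}"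
      using poly_roots_finite[OF \<open>g - 1 \<noteq> 0\<close>] by (intro card_mono) auto
    moreover have "card (set L) = length L" using distL by (simp add: distinct_card)
    ultimately show False using c Lne by (cases L) auto
  qed
  hence "PM g = mat 1" by (simp add: PM_1)
  moreover have "PM g = (\<Sum>l\<in>set L. Proj l)"
    by (simp add: g_def PM_sum PM_smult PM_prod_lin Proj_def)
  ultimately show ?thesis by simp
qed

lemma MP_adj: "\<forall>m\<in>set xs. cnj m = m \<Longrightarrow> adj (MP xs) = MP xs"
proof (induction xs)
  case Nil thus ?case by (simp add: adj_mat)
next
  case (Cons a xs)
  thus ?case by (simp add: adj_mult lin_adj MP_lin)
qed

lemma Proj_adj: assumes "l \<in> set L" shows "adj (Proj l) = Proj l"
proof -
  have r: "\<forall>m\<in>set (remove1 l L). cnj m = m" using realL by (meson notin_set_remove1)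
  have "cnj (cL l) = cL l" unfolding cL_def by (rule cnj_prodlist[OF realL[OF assms] r])
  thus ?thesis by (simp add: Proj_def adj_scale MP_adj[OF r])
qed

end

lemma sums_mat:
  assumes "\<And>a b. (\<lambda>n. f n $ a $ b) sums (s $ a $ b)"
  shows "f sums (s::complex^'n^'m)"
  unfolding sums_def
  apply (rule vec_tendstoI)
  apply (rule vec_tendstoI)
  using assms by (simp add: sums_def)

lemma exp_sums_scale:
  "(\<lambda>n. (t ^ n / fact n) *\<^sub>R cmat_scale (z ^ n) M) sums cmat_scale (exp (of_real t * z)) M"
proof (rule sums_mat)
  fix a b
  have "(\<lambda>n. ((of_real t * z) ^ n /\<^sub>R fact n) * M $ a $ b) sums (exp (of_real t * z) * M $ a $ b)"
    by (rule sums_mult2[OF exp_converges])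
  moreover have "\<And>n. ((t ^ n / fact n) *\<^sub>R cmat_scale (z ^ n) M) $ a $ b
      = ((of_real t * z) ^ n /\<^sub>R fact n) * M $ a $ b"
    by (simp add: cmat_scale_def, simp add: scaleR_conv_of_real power_mult_distrib divide_inverse mult_ac)
  ultimately show "(\<lambda>n. ((t ^ n / fact n) *\<^sub>R cmat_scale (z ^ n) M) $ a $ b) sums
      (cmat_scale (exp (of_real t * z)) M $ a $ b)"
    by (simp add: cmat_scale_def)
qed

locale prog = spec H L for H :: "complex^'d^'d" and L +
  fixes lam :: "'k::finite \<Rightarrow> complex"
  assumes bij: "bij_betw lam UNIV (set L)"
begin

definition Pj :: "'k \<Rightarrow> complex^'d^'d" where "Pj j = Proj (lam j)"

lemma lam_in: "lam j \<in> set L" using bij by (auto simp: bij_betw_def)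
lemma lam_inj: "lam j = lam k \<longleftrightarrow> j = k" using bij by (auto simp: bij_betw_def inj_on_def)
lemma lam_real: "cnj (lam j) = lam j" using realL lam_in by blast

lemma Pj_sum: "(\<Sum>j\<in>UNIV. Pj j) = mat 1"
proof -
  have "(\<Sum>j\<in>UNIV. Pj j) = (\<Sum>l\<in>set L. Proj l)"
    unfolding Pj_def by (rule sum.reindex_bij_betw[OF bij])
  thus ?thesis using Proj_sum by simp
qed

lemma Pj_orth: "Pj j ** Pj k = (if j = k then Pj k else 0)"
  using Proj_orth[OF lam_in lam_in, of j k] by (simp add: Pj_def lam_inj)

lemma Pj_eig: "H ** Pj j = cmat_scale (lam j) (Pj j)"
  by (simp add: Pj_def Proj_eig lam_in)

lemma Pj_eig2: "Pj j ** H = cmat_scale (lam j) (Pj j)"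
  by (simp add: Pj_def Proj_eig lam_in Proj_H)

lemma Pj_adj: "adj (Pj j) = Pj j"
  by (simp add: Pj_def Proj_adj lam_in)

definition T :: "complex^'d^'d \<Rightarrow> 'k \<Rightarrow> 'k \<Rightarrow> complex^'d^'d" where
  "T \<rho> j k = Pj j ** \<rho> ** Pj k"

definition w :: "'k \<Rightarrow> 'k \<Rightarrow> complex" where "w j k = \<i> * (lam j - lam k)"

lemma T_H1: "H ** T \<rho> j k = cmat_scale (lam j) (T \<rho> j k)"
  by (simp add: T_def matrix_mul_assoc Pj_eig scale_mult_left)

lemma T_H2: "T \<rho> j k ** H = cmat_scale (lam k) (T \<rho> j k)"
  by (simp add: T_def matrix_mul_assoc[symmetric] Pj_eig2 scale_mult_right)

lemma T_sum: "(\<Sum>j\<in>UNIV. \<Sum>k\<in>UNIV. T \<rho> j k) = \<rho>"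
proof -
  have "(\<Sum>j\<in>UNIV. \<Sum>k\<in>UNIV. T \<rho> j k) = (\<Sum>j\<in>UNIV. (Pj j ** \<rho>) ** (\<Sum>k\<in>UNIV. Pj k))"
    by (simp add: T_def sum_mult_right)
  also have "\<dots> = (\<Sum>j\<in>UNIV. Pj j ** \<rho>)"
    by (simp add: Pj_sum)
  also have "\<dots> = (\<Sum>j\<in>UNIV. Pj j) ** \<rho>"
    by (simp add: sum_mult_left)
  finally show ?thesis by (simp add: Pj_sum)
qed

lemma Lpow: "(i_ad H ^^ n) \<rho> = (\<Sum>j\<in>UNIV. \<Sum>k\<in>UNIV. cmat_scale (w j k ^ n) (T \<rho> j k))"
proof (induction n)
  case 0
  show ?case by (simp add: T_sum)
next
  case (Suc n)
  define X where "X = (\<Sum>j\<in>UNIV. \<Sum>k\<in>UNIV. cmat_scale (w j k ^ n) (T \<rho> j k))"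
  have "H ** X = (\<Sum>j\<in>UNIV. \<Sum>k\<in>UNIV. cmat_scale (w j k ^ n * lam j) (T \<rho> j k))"
    by (simp add: X_def sum_mult_right scale_mult_right[symmetric] T_H1 scale_scale)
  moreover have "X ** H = (\<Sum>j\<in>UNIV. \<Sum>k\<in>UNIV. cmat_scale (w j k ^ n * lam k) (T \<rho> j k))"
    by (simp add: X_def sum_mult_left scale_mult_left[symmetric] T_H2 scale_scale)
  ultimately have "i_ad H X = cmat_scale \<i> (\<Sum>j\<in>UNIV. \<Sum>k\<in>UNIV.
        cmat_scale (w j k ^ n * lam j) (T \<rho> j k) - cmat_scale (w j k ^ n * lam k) (T \<rho> j k))"
    by (simp add: i_ad_def commutator_def sum_subtractf)
  also have "\<dots> = (\<Sum>j\<in>UNIV. \<Sum>k\<in>UNIV. cmat_scale (w j k ^ Suc n) (T \<rho> j k))"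
    by (simp add: scale_sum scale_sub_scalar scale_scale w_def algebra_simps)
  finally show ?case using Suc by (simp add: X_def)
qed

lemma super_exp_eq:
  "super_exp t (i_ad H) \<rho> = (\<Sum>j\<in>UNIV. \<Sum>k\<in>UNIV. cmat_scale (exp (of_real t * w j k)) (T \<rho> j k))"
proof -
  have "(\<lambda>n. (t ^ n / fact n) *\<^sub>R (i_ad H ^^ n) \<rho>) =
        (\<lambda>n. \<Sum>j\<in>UNIV. \<Sum>k\<in>UNIV. (t ^ n / fact n) *\<^sub>R cmat_scale (w j k ^ n) (T \<rho> j k))"
    by (simp add: Lpow scaleR_sum_right)
  moreover have "(\<lambda>n. \<Sum>j\<in>UNIV. \<Sum>k\<in>UNIV. (t ^ n / fact n) *\<^sub>R cmat_scale (w j k ^ n) (T \<rho> j k))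
     sums (\<Sum>j\<in>UNIV. \<Sum>k\<in>UNIV. cmat_scale (exp (of_real t * w j k)) (T \<rho> j k))"
    by (intro sums_sum exp_sums_scale)
  ultimately show ?thesis
    unfolding super_exp_def by (simp add: sums_iff)
qed

end

lemma trace_adj: "trace (adj A) = cnj (trace A)"
  by (simp add: trace_def adj_def)

lemma trace_tensor: "trace (tensor_mat A B) = trace A * trace B"
  by (simp add: trace_def tensor_mat_def sum_product UNIV_Times_UNIV[symmetric] sum.cartesian_product
      split_def del: UNIV_Times_UNIV)

context prog
begin

definition e :: "real \<Rightarrow> 'k \<Rightarrow> complex" where "e t j = exp (- (\<i> * of_real t * lam j))"

definition \<pi> :: "real \<Rightarrow> complex^'k^'k" where
  "\<pi> t = (\<chi> j k. cnj (e t j) * e t k / of_nat CARD('k))"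

lemma e_prod: "cnj (e t j) * e t k = exp (of_real t * w j k)"
proof -
  have "cnj (e t j) = exp (\<i> * of_real t * lam j)"
    by (simp add: e_def exp_cnj lam_real)
  hence "cnj (e t j) * e t k = exp (\<i> * of_real t * lam j) * exp (- (\<i> * of_real t * lam k))"
    by (simp add: e_def)
  also have "\<dots> = exp (\<i> * of_real t * lam j + - (\<i> * of_real t * lam k))"
    by (simp only: exp_add)
  also have "\<i> * of_real t * lam j + - (\<i> * of_real t * lam k) = of_real t * w j k"
    by (simp add: w_def algebra_simps)
  finally show ?thesis .
qed

lemma \<pi>_density: "density_mat (\<pi> t)"
proof -
  have tr: "trace (\<pi> t) = 1"
    by (simp add: trace_def \<pi>_def e_prod w_def)
  have "psd_mat (\<pi> t)"
    unfolding psd_mat_def Let_def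
  proof
    fix v :: "complex^'k"
    define S where "S = (\<Sum>b\<in>UNIV. e t b * v $ b)"
    have "(\<Sum>a\<in>UNIV. \<Sum>b\<in>UNIV. cnj (v $ a) * \<pi> t $ a $ b * v $ b)
        = cnj S * S / of_nat CARD('k)"
      by (simp add: S_def \<pi>_def sum_product sum_divide_distrib mult_ac, subst sum.swap, simp)
    also have "cnj S * S = of_real ((cmod S)\<^sup>2)"
      by (metis complex_norm_square mult.commute)
    finally have q: "(\<Sum>a\<in>UNIV. \<Sum>b\<in>UNIV. cnj (v $ a) * \<pi> t $ a $ b * v $ b)
        = of_real ((cmod S)\<^sup>2 / real CARD('k))" by simp
    show "Im (\<Sum>a\<in>UNIV. \<Sum>b\<in>UNIV. cnj (v $ a) * \<pi> t $ a $ b * v $ b) = 0 \<and>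
          0 \<le> Re (\<Sum>a\<in>UNIV. \<Sum>b\<in>UNIV. cnj (v $ a) * \<pi> t $ a $ b * v $ b)"
      unfolding q by simp
  qed
  thus ?thesis using tr by (simp add: density_mat_def)
qed

definition blk :: "complex^('d \<times> 'k)^('d \<times> 'k) \<Rightarrow> 'k \<Rightarrow> 'k \<Rightarrow> complex^'d^'d" where
  "blk X j k = (\<chi> a b. X $ (a, j) $ (b, k))"

definition Q :: "complex^('d \<times> 'k)^('d \<times> 'k) \<Rightarrow> complex^'d^'d" where
  "Q X = (\<Sum>j\<in>UNIV. \<Sum>k\<in>UNIV. cmat_scale (of_nat CARD('k)) (Pj j ** blk X j k ** Pj k))"

definition E0 :: "complex^'d^'d" where "E0 = cmat_scale (1 / of_nat CARD('d)) (mat 1)"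

definition Pmap :: "complex^('d \<times> 'k)^('d \<times> 'k) \<Rightarrow> complex^'d^'d" where
  "Pmap X = Q X + cmat_scale (trace X - trace (Q X)) E0"

lemma blk_add: "blk (A + B) j k = blk A j k + blk B j k"
  by (simp add: blk_def vec_eq_iff)
lemma blk_scale: "blk (cmat_scale c A) j k = cmat_scale c (blk A j k)"
  by (simp add: blk_def cmat_scale_def vec_eq_iff)
lemma blk_tensor: "blk (tensor_mat \<rho> \<sigma>) j k = cmat_scale (\<sigma> $ j $ k) \<rho>"
  by (simp add: blk_def cmat_scale_def tensor_mat_def vec_eq_iff mult.commute)
lemma blk_herm:
  assumes "hermitian_mat X" shows "adj (blk X j k) = blk X k j"
proof -
  have h: "\<And>p q. cnj (X$q$p) = X$p$q" using assms unfolding hermitian_mat_def by (metis complex_cnj_cnj)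
  show ?thesis unfolding blk_def adj_def vec_eq_iff by (simp add: h)
qed

lemma Q_add: "Q (A + B) = Q A + Q B"
  by (simp add: Q_def blk_add matrix_add_ldistrib add_mult_left scale_add sum.distrib)

lemma sandwich: "A ** cmat_scale c X ** B = cmat_scale c (A ** X ** B)"
  by (simp only: scale_mult_right[symmetric] scale_mult_left[symmetric])

lemma K_nz: "(of_nat CARD('k) :: complex) \<noteq> 0" by simp

lemma K_comm: "cmat_scale (of_nat CARD('k)) (cmat_scale c X) = cmat_scale c (cmat_scale (of_nat CARD('k)) X)"
  by (simp add: cmat_scale_def vec_eq_iff mult_ac)

lemma Q_scale: "Q (cmat_scale c A) = cmat_scale c (Q A)"
  unfolding Q_def blk_scale sandwich scale_sum K_comm ..

lemma Q_herm:
  assumes "hermitian_mat X"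
  shows "adj (Q X) = Q X"
proof -
  have "adj (Q X) = (\<Sum>j\<in>UNIV. \<Sum>k\<in>UNIV. cmat_scale (of_nat CARD('k)) (Pj k ** blk X k j ** Pj j))"
    by (simp add: Q_def adj_sum adj_scale adj_mult Pj_adj blk_herm[OF assms] matrix_mul_assoc)
  also have "\<dots> = Q X"
    unfolding Q_def by (rule sum.swap)
  finally show ?thesis .
qed

lemma E0_adj: "adj E0 = E0"
  by (simp add: E0_def adj_scale adj_mat)

lemma E0_trace: "trace E0 = 1"
  by (simp add: E0_def trace_scale trace_I)

lemma HPTP_Pmap: "HPTP Pmap"
proof -
  have lin: "complex_linear_map Pmap"
    unfolding complex_linear_map_def
  proof (intro conjI allI)
    fix A B
    show "Pmap (A + B) = Pmap A + Pmap B"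
      by (simp add: Pmap_def Q_add trace_add) (simp add: cmat_scale_def vec_eq_iff algebra_simps)
  next
    fix c A
    show "Pmap (cmat_scale c A) = cmat_scale c (Pmap A)"
      by (simp add: Pmap_def Q_scale trace_scale scale_add scale_scale right_diff_distrib)
  qed
  have herm: "hermitian_mat (Pmap A)" if "hermitian_mat A" for A
  proof -
    have "adj A = A" using that by (simp add: herm_adj)
    hence "cnj (trace A) = trace A" by (metis trace_adj)
    moreover have "cnj (trace (Q A)) = trace (Q A)" by (metis trace_adj Q_herm[OF that])
    ultimately show ?thesis
      by (simp add: herm_adj Pmap_def adj_add adj_scale Q_herm[OF that] E0_adj)
  qed
  have tr: "trace (Pmap A) = trace A" for A
    by (simp add: Pmap_def trace_add trace_scale E0_trace)
  show ?thesis using lin herm tr by (simp add: HPTP_def)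
qed

lemma trace_T: "trace (T \<rho> j k) = (if j = k then trace (Pj j ** \<rho>) else 0)"
proof -
  have "trace (T \<rho> j k) = trace ((Pj j ** \<rho>) ** Pj k)"
    by (simp add: T_def)
  also have "\<dots> = trace (Pj k ** (Pj j ** \<rho>))"
    by (rule trace_mul_sym)
  also have "\<dots> = trace ((Pj k ** Pj j) ** \<rho>)" by (simp add: matrix_mul_assoc)
  finally show ?thesis by (simp add: Pj_orth trace_def)
qed

lemma Pmap_tensor: "Pmap (tensor_mat \<rho> (\<pi> t)) = super_exp t (i_ad H) \<rho>"
proof -
  have Qt: "Q (tensor_mat \<rho> (\<pi> t)) =
      (\<Sum>j\<in>UNIV. \<Sum>k\<in>UNIV. cmat_scale (exp (of_real t * w j k)) (T \<rho> j k))"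
    unfolding Q_def blk_tensor sandwich scale_scale T_def
    by (simp add: \<pi>_def e_prod K_nz)
  have "trace (Q (tensor_mat \<rho> (\<pi> t))) = (\<Sum>j\<in>UNIV. trace (Pj j ** \<rho>))"
    by (simp add: Qt trace_sum trace_scale trace_T w_def if_distrib cong: if_cong)
  also have "\<dots> = trace \<rho>"
    by (simp add: trace_sum[symmetric] sum_mult_left[symmetric] Pj_sum)
  also have "\<dots> = trace (tensor_mat \<rho> (\<pi> t))"
    using \<pi>_density by (simp add: trace_tensor density_mat_def)
  finally have "trace (tensor_mat \<rho> (\<pi> t)) - trace (Q (tensor_mat \<rho> (\<pi> t))) = 0" by simp
  thus ?thesis by (simp add: Pmap_def Qt super_exp_eq)
qed

end

theorem proposition3:
  fixes H :: "complex^'d^'d"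
  assumes "hermitian_mat H"
    and "CARD('k::finite) = card (mat_eigenvalues H)"
  shows "\<exists>(P :: complex^('d \<times> 'k)^('d \<times> 'k) \<Rightarrow> complex^'d^'d) (\<pi> :: real \<Rightarrow> complex^'k^'k).
           HPTP P \<and> (\<forall>t\<ge>0. density_mat (\<pi> t)) \<and>
           (\<forall>t\<ge>0. \<forall>\<rho>. P (tensor_mat \<rho> (\<pi> t)) = super_exp t (i_ad H) \<rho>)"
proof -
  have cpos: "card (mat_eigenvalues H) > 0" using assms(2) by (metis finite_UNIV_card_ge_0 finite)
  hence fin: "finite (mat_eigenvalues H)" using card_gt_0_iff by blast
  have ne: "mat_eigenvalues H \<noteq> {}" using cpos by auto
  obtain L where L: "distinct L" "set L = mat_eigenvalues H"
    using finite_distinct_list[OF fin] by blast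
  have Lne: "L \<noteq> []" using L ne by auto
  have "card (UNIV :: 'k set) = card (set L)" using assms(2) L by simp
  then obtain lam :: "'k \<Rightarrow> complex" where b: "bij_betw lam UNIV (set L)"
    using finite_same_card_bij[of "UNIV :: 'k set" "set L"] by auto
  interpret prog H L lam
    by unfold_locales (use assms(1) L Lne b in auto)
  show ?thesis
    using HPTP_Pmap \<pi>_density Pmap_tensor by blast
qed


end
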